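(* Let $d\ge1$, $s\in(0,1/2)$, $\Omega\subset\mathbb{R}^d$ a bounded domain and $g\in L^\infty(\Omega^c)$. For $H\ge 1$ let $\Omega_H$, $\eta_H$, $g_H$, $T_H$, $E_H$ be as in the context. Then for every $v\in\mathbb{V}^g\cap L^\infty(\mathbb{R}^d)$ and every $w\in\mathbb{V}^{g_H}\cap L^\infty(\mathbb{R}^d)$, \[ \big|I_s[v]-I_s[T_Hv]\big|\le C\,H^{-1-2s},\qquad \big|I_s[w]-I_s[E_Hw]\big|\le C\,H^{-1-2s}, \] where $C$ depends only on $d$, $s$, $\Omega$, the constants in the definition of $\Omega_H$, and on $\|v\|_{L^\infty(\mathbb{R}^d)}$ (respectively $\|w\|_{L^\infty(\mathbb{R}^d)}$ and $\|g\|_{L^\infty(\Omega^c)}$), but not on $H$.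
   Context: $\Omega^c=\mathbb{R}^d\setminus\Omega$, $Q_\Omega := (\mathbb{R}^d\times\mathbb{R}^d)\setminus(\Omega^c\times\Omega^c)$, $F_s(\rho) := \int_0^\rho \frac{\rho-r}{(1+r^2)^{(d+1+2s)/2}}\,dr$, and $I_s[u] := \iint_{Q_\Omega} F_s\!\left(\frac{u(x)-u(y)}{|x-y|}\right)\frac{dx\,dy}{|x-y|^{d+2s-1}}$. For $g\in L^\infty(\Omega^c)$, $\mathbb{V}^g := \{v:\mathbb{R}^d\to\mathbb{R} : v|_\Omega\in W^{2s}_1(\Omega),\ v=g \text{ in }\Omega^c\}$. For $H>0$, $\Omega_H$ is a bounded open set containing $\Omega$ such that $c_1H\le \operatorname{dist}(x,\overline\Omega)\le c_2 H$ for all $x\in\partial\Omega_H$, with fixed constants $0<c_1\le c_2$. The cutoff $\eta_H\in C^\infty(\Omega^c)$ satisfies $0\le\eta_H\le1$, $\operatorname{supp}\eta_H\subset\overline{\Omega}_{H+1}\setminus\Omega$, and $\eta_H=1$ on $\Omega_H\setminus\Omega$. Set $g_H:=g\eta_H$. The truncation operator $T_H:\mathbb{V}^g\to\mathbb{V}^{g_H}$ is $T_Hv := v$ in $\Omega$ and $T_Hv:=v\eta_H$ in $\Omega^c$; the extension operator $E_H:\mathbb{V}^{g_H}\to\mathbb{V}^g$ is $E_Hw:=w$ in $\Omega$ and $E_Hw := w+(1-\eta_H)g$ in $\Omega^c$. *)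

theory Defs
  imports "HOL-Analysis.Analysis"
begin

fun iter_dderiv :: "('a::euclidean_space \<Rightarrow> real) \<Rightarrow> 'a list \<Rightarrow> 'a \<Rightarrow> real" where
  "iter_dderiv f [] = f"
| "iter_dderiv f (v # vs) = (\<lambda>x. frechet_derivative (iter_dderiv f vs) (at x) v)"

(* C^\<infinity> on an open set S: all iterated derivatives exist (hence are continuous) *)
definition smooth_on :: "'a::euclidean_space set \<Rightarrow> ('a \<Rightarrow> real) \<Rightarrow> bool" where
  "smooth_on S f \<longleftrightarrow> (\<forall>vs. \<forall>x\<in>S. iter_dderiv f vs differentiable (at x))"

definition F_s :: "nat \<Rightarrow> real \<Rightarrow> real \<Rightarrow> real" where
  "F_s d s \<rho> = (LBINT r=0..\<rho>. (\<rho> - r) / (1 + r\<^sup>2) powr ((real d + 1 + 2 * s) / 2))"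

definition Q_set :: "'a set \<Rightarrow> ('a \<times> 'a) set" where
  "Q_set \<Omega> = UNIV - ((- \<Omega>) \<times> (- \<Omega>))"

(* I_s[u]; the integrand is nonnegative, so it is taken as an extended nonnegative integral
   with respect to Lebesgue measure on R^d x R^d *)
definition I_s :: "real \<Rightarrow> 'a::euclidean_space set \<Rightarrow> ('a \<Rightarrow> real) \<Rightarrow> ennreal" where
  "I_s s \<Omega> u = (\<integral>\<^sup>+ z. indicator (Q_set \<Omega>) z *
      ennreal (F_s DIM('a) s ((u (fst z) - u (snd z)) / norm (fst z - snd z))
               / norm (fst z - snd z) powr (real DIM('a) + 2 * s - 1)) \<partial>lebesgue)"

definition W_frac_1 :: "real \<Rightarrow> 'a::euclidean_space set \<Rightarrow> ('a \<Rightarrow> real) \<Rightarrow> bool" where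
  "W_frac_1 \<sigma> \<Omega> u \<longleftrightarrow> set_integrable lebesgue \<Omega> u \<and>
     (\<integral>\<^sup>+ z. indicator (\<Omega> \<times> \<Omega>) z *
        ennreal (\<bar>u (fst z) - u (snd z)\<bar> / norm (fst z - snd z) powr (real DIM('a) + \<sigma>)) \<partial>lebesgue) < \<infinity>"

definition V_space :: "real \<Rightarrow> 'a::euclidean_space set \<Rightarrow> ('a \<Rightarrow> real) \<Rightarrow> ('a \<Rightarrow> real) set" where
  "V_space s \<Omega> g = {v. W_frac_1 (2 * s) \<Omega> v \<and> (\<forall>x\<in>- \<Omega>. v x = g x)}"

definition Linf_bound :: "'a::euclidean_space set \<Rightarrow> ('a \<Rightarrow> real) \<Rightarrow> real \<Rightarrow> bool" where
  "Linf_bound A u M \<longleftrightarrow> set_borel_measurable lebesgue A u \<and> (AE x in lebesgue. x \<in> A \<longrightarrow> \<bar>u x\<bar> \<le> M)"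

definition trunc_op :: "'a set \<Rightarrow> ('a \<Rightarrow> real) \<Rightarrow> ('a \<Rightarrow> real) \<Rightarrow> 'a \<Rightarrow> real" where
  "trunc_op \<Omega> \<eta> v = (\<lambda>x. if x \<in> \<Omega> then v x else v x * \<eta> x)"

definition ext_op :: "'a set \<Rightarrow> ('a \<Rightarrow> real) \<Rightarrow> ('a \<Rightarrow> real) \<Rightarrow> ('a \<Rightarrow> real) \<Rightarrow> 'a \<Rightarrow> real" where
  "ext_op \<Omega> \<eta> g w = (\<lambda>x. if x \<in> \<Omega> then w x else w x + (1 - \<eta> x) * g x)"

end

theory Submission
  imports Defs
begin

lemma nn_int_add_le:
  assumes k: "k \<in> borel_measurable M"
  shows "(\<integral>\<^sup>+ x. f x + k x \<partial>M) \<le> integral\<^sup>N M f + integral\<^sup>N M k"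
proof -
  have "integral\<^sup>S M g \<le> integral\<^sup>N M f + integral\<^sup>N M k"
    if g: "simple_function M g" "g \<le> (\<lambda>x. f x + k x)" "\<forall>x. g x < top" for g
  proof -
    have gm: "g \<in> borel_measurable M" using g(1) by (rule borel_measurable_simple_function)
    have gt: "\<And>x. g x \<noteq> top" using g(3) by (metis less_irrefl)
    have "integral\<^sup>S M g = integral\<^sup>N M g" using g(1) by (simp add: nn_integral_eq_simple_integral)
    also have "\<dots> \<le> (\<integral>\<^sup>+ x. (g x - k x) + k x \<partial>M)"
    proof (intro nn_integral_mono)
      fix x show "g x \<le> g x - k x + k x"
        by (cases "k x \<le> g x") (auto simp: diff_add_cancel_ennreal diff_eq_0_ennreal g(3))
    qed
    also have "\<dots> = (\<integral>\<^sup>+ x. g x - k x \<partial>M) + integral\<^sup>N M k"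
      using gm k by (intro nn_integral_add) auto
    also have "(\<integral>\<^sup>+ x. g x - k x \<partial>M) \<le> integral\<^sup>N M f"
      using g(2) gt by (intro nn_integral_mono) (auto simp: le_fun_def ennreal_minus_le_iff add.commute)
    finally show ?thesis by (simp add: add_right_mono)
  qed
  then show ?thesis unfolding nn_integral_def_finite[of M "\<lambda>x. f x + k x"] by (intro SUP_least) auto
qed

lemma F_s_le:
  assumes "0 \<le> e"
  shows "(LBINT r=0..\<rho>. (\<rho> - r) / (1 + r\<^sup>2) powr e) \<le> \<rho>\<^sup>2 / 2"
proof -
  have FTC: "(LBINT r=0..\<rho>. (\<rho> - r)) = \<rho>\<^sup>2/2"
  proof -
    have "(LBINT r=0..\<rho>. (\<rho> - r)) = (\<rho>*\<rho> - \<rho>\<^sup>2/2) - (\<rho>*0 - 0\<^sup>2/2)"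
    proof -
      have c: "continuous_on {min 0 \<rho>..max 0 \<rho>} (\<lambda>x. \<rho> - x)" by (intro continuous_intros)
      have "((\<lambda>x. \<rho>*x - x\<^sup>2/2) has_real_derivative (\<rho> - x)) (at x within {min 0 \<rho>..max 0 \<rho>})" for x
        by (auto intro!: derivative_eq_intros)
      then have d: "((\<lambda>x. \<rho>*x - x\<^sup>2/2) has_vector_derivative (\<rho> - x)) (at x within {min 0 \<rho>..max 0 \<rho>})" for x
        by (simp add: has_real_derivative_iff_has_vector_derivative)
      show ?thesis
        using interval_integral_FTC_finite[where F="\<lambda>x. \<rho>*x - x\<^sup>2/2" and f="\<lambda>x. \<rho> - x" and a=0 and b=\<rho>, OF c d]
        by (simp add: zero_ereal_def)
    qed
    then show ?thesis by (simp add: power2_eq_square)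
  qed
  show ?thesis
  proof (cases "0 \<le> \<rho>")
    case True
    show ?thesis
    proof (cases "set_integrable lborel {0..\<rho>} (\<lambda>r. (\<rho> - r) / (1 + r\<^sup>2) powr e)")
      case True
      have "(LBINT r=0..\<rho>. (\<rho> - r) / (1 + r\<^sup>2) powr e) = (LBINT r:{0..\<rho>}. (\<rho> - r) / (1 + r\<^sup>2) powr e)"
        using \<open>0\<le>\<rho>\<close> interval_integral_Icc[of 0 \<rho> "\<lambda>r. (\<rho> - r) / (1 + r\<^sup>2) powr e"] by (simp add: zero_ereal_def)
      also have "\<dots> \<le> (LBINT r:{0..\<rho>}. (\<rho> - r))"
      proof (rule set_integral_mono[OF True])
        show "set_integrable lborel {0..\<rho>} (\<lambda>r. \<rho> - r)"
          by (intro borel_integrable_atLeastAtMost') (auto intro!: continuous_intros)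
        fix r assume "r \<in> {0..\<rho>}"
        then have "1 \<le> (1 + r\<^sup>2) powr e" using assms by (intro ge_one_powr_ge_zero) auto
        then show "(\<rho> - r) / (1 + r\<^sup>2) powr e \<le> \<rho> - r" using \<open>r \<in> {0..\<rho>}\<close>
          by (simp add: divide_le_eq mult_le_cancel_left1 )
      qed
      also have "\<dots> = \<rho>\<^sup>2/2" using FTC \<open>0\<le>\<rho>\<close> interval_integral_Icc[of 0 \<rho> "\<lambda>r. \<rho> - r"] by (simp add: zero_ereal_def)
      finally show ?thesis .
    next
      case False
      then have "(LBINT r:{0..\<rho>}. (\<rho> - r) / (1 + r\<^sup>2) powr e) = 0"
        by (simp add: set_lebesgue_integral_def set_integrable_def not_integrable_integral_eq)
      then show ?thesis using \<open>0\<le>\<rho>\<close> interval_integral_Icc[of 0 \<rho> "\<lambda>r. (\<rho> - r) / (1 + r\<^sup>2) powr e"] by (simp add: zero_ereal_def)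
    qed
  next
    case False
    show ?thesis
    proof (cases "set_integrable lborel {\<rho>..0} (\<lambda>r. (\<rho> - r) / (1 + r\<^sup>2) powr e)")
      case True
      have "(LBINT r=0..\<rho>. (\<rho> - r) / (1 + r\<^sup>2) powr e) = - (LBINT r:{\<rho>..0}. (\<rho> - r) / (1 + r\<^sup>2) powr e)"
      proof -
        have "(LBINT r=0..\<rho>. (\<rho> - r) / (1 + r\<^sup>2) powr e) = -(LBINT r=\<rho>..0. (\<rho> - r) / (1 + r\<^sup>2) powr e)"
          by (rule interval_integral_endpoints_reverse)
        also have "(LBINT r=\<rho>..0. (\<rho> - r) / (1 + r\<^sup>2) powr e) = (LBINT r:{\<rho>..0}. (\<rho> - r) / (1 + r\<^sup>2) powr e)"
          using False interval_integral_Icc[of \<rho> 0 "\<lambda>r. (\<rho> - r) / (1 + r\<^sup>2) powr e"] by (simp add: zero_ereal_def)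
        finally show ?thesis .
      qed
      also have "\<dots> \<le> - (LBINT r:{\<rho>..0}. (\<rho> - r))"
      proof -
        have "(LBINT r:{\<rho>..0}. (\<rho> - r)) \<le> (LBINT r:{\<rho>..0}. (\<rho> - r) / (1 + r\<^sup>2) powr e)"
        proof (rule set_integral_mono[OF _ True])
          show "set_integrable lborel {\<rho>..0} (\<lambda>r. \<rho> - r)"
            by (intro borel_integrable_atLeastAtMost') (auto intro!: continuous_intros)
          fix r assume "r \<in> {\<rho>..0}"
          then have "1 \<le> (1 + r\<^sup>2) powr e" using assms by (intro ge_one_powr_ge_zero) auto
          then show "(\<rho> - r) \<le> (\<rho> - r) / (1 + r\<^sup>2) powr e" using \<open>r \<in> {\<rho>..0}\<close>
              mult_left_mono_neg[of 1 "(1+r\<^sup>2) powr e" "\<rho> - r"]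
            by (simp add: le_divide_eq)
        qed
        then show ?thesis by simp
      qed
      also have "\<dots> = \<rho>\<^sup>2/2"
      proof -
        have "(LBINT r=0..\<rho>. \<rho> - r) = -(LBINT r=\<rho>..0. \<rho> - r)"
          by (rule interval_integral_endpoints_reverse)
        also have "(LBINT r=\<rho>..0. \<rho> - r) = (LBINT r:{\<rho>..0}. \<rho> - r)"
          using False interval_integral_Icc[of \<rho> 0 "\<lambda>r. \<rho> - r"] by (simp add: zero_ereal_def)
        finally show ?thesis using FTC by simp
      qed
      finally show ?thesis .
    next
      case False
      then have "(LBINT r:{\<rho>..0}. (\<rho> - r) / (1 + r\<^sup>2) powr e) = 0"
        by (simp add: set_lebesgue_integral_def set_integrable_def not_integrable_integral_eq)
      then show ?thesis
      proof -
        have "(LBINT r=0..\<rho>. (\<rho> - r) / (1 + r\<^sup>2) powr e) = -(LBINT r=\<rho>..0. (\<rho> - r) / (1 + r\<^sup>2) powr e)"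
          by (rule interval_integral_endpoints_reverse)
        also have "(LBINT r=\<rho>..0. (\<rho> - r) / (1 + r\<^sup>2) powr e) = (LBINT r:{\<rho>..0}. (\<rho> - r) / (1 + r\<^sup>2) powr e)"
          using \<open>\<not> 0 \<le> \<rho>\<close> interval_integral_Icc[of \<rho> 0 "\<lambda>r. (\<rho> - r) / (1 + r\<^sup>2) powr e"] by (simp add: zero_ereal_def)
        finally show ?thesis using \<open>(LBINT r:{\<rho>..0}. (\<rho> - r) / (1 + r\<^sup>2) powr e) = 0\<close> by simp
      qed
    qed
  qed
qed

lemma shell_term:
  fixes R p :: real and d k :: nat
  assumes "R > 0"
  shows "(2^k*R) powr (-p) * (V * (2^(k+1)*R)^d) = (2^d * V * R powr (real d - p)) * (2 powr (real d - p))^k"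
proof -
  have "(2^k*R) powr (-p) = 2 powr (-p * k) * R powr (-p)"
    using assms by (simp add: powr_mult powr_realpow[symmetric] powr_powr mult.commute)
  moreover have "(2^(k+1)*R)^d = 2^d * 2 powr (real d * k) * R powr real d"
    using assms by (simp add: power_mult_distrib powr_realpow[symmetric] powr_powr power_add
        powr_power mult.commute)
  moreover have "(2 powr (real d - p))^k = 2 powr ((real d - p) * k)"
    by (simp add: powr_realpow[symmetric] powr_powr powr_power)
  moreover have "R powr (real d - p) = R powr real d * R powr (-p)"
    by (simp add: powr_add[symmetric])
  moreover have "2 powr ((real d - p) * k) = 2 powr (-p * k) * 2 powr (real d * k)"
    by (simp add: powr_add[symmetric] algebra_simps)
  ultimately show ?thesis by (simp add: algebra_simps)
qed

lemma shell_bound: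
  fixes c :: "'a::euclidean_space" and R p :: real
  assumes R: "R > 0" and p: "real DIM('a) < p"
  shows "(\<integral>\<^sup>+ y. indicator {y. R \<le> dist c y} y * ennreal (dist c y powr (-p)) \<partial>lborel)
     \<le> ennreal ((2^DIM('a) * unit_ball_vol (real DIM('a)) * R powr (real DIM('a) - p)) / (1 - 2 powr (real DIM('a) - p)))"
proof -
  define d where "d = DIM('a)"
  define V where "V = unit_ball_vol (real d)"
  define A where "A = 2^d * V * R powr (real d - p)"
  define q where "q = 2 powr (real d - p)"
  have q: "0 \<le> q" "q < 1" unfolding q_def using p d_def by (auto intro!: powr_less_one)
  have A: "0 \<le> A" unfolding A_def V_def by auto
  have pt: "indicator {y. R \<le> dist c y} y * ennreal (dist c y powr (-p))
      \<le> (\<Sum>k. ennreal ((2^k*R) powr (-p)) * indicator (ball c (2^(k+1)*R)) y)" for y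
  proof (cases "R \<le> dist c y")
    case True
    define k where "k = nat \<lfloor>log 2 (dist c y / R)\<rfloor>"
    have r1: "1 \<le> dist c y / R" using True R by auto
    have lg: "0 \<le> log 2 (dist c y / R)" using r1 by auto
    have "2^k \<le> dist c y / R"
    proof -
      have "(2::real)^k = 2 powr real k" by (simp add: powr_realpow)
      also have "\<dots> \<le> 2 powr log 2 (dist c y / R)" unfolding k_def using lg by (intro powr_mono) auto
      also have "\<dots> = dist c y / R" using r1 by simp
      finally show ?thesis .
    qed
    then have k1: "2^k * R \<le> dist c y" using R by (simp add: le_divide_eq)
    have "dist c y / R < 2^(k+1)"
    proof -
      have "dist c y / R = 2 powr log 2 (dist c y / R)" using r1 by simp
      also have "\<dots> < 2 powr real (k+1)" unfolding k_def using lg by (intro powr_less_mono) linarith+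
      also have "\<dots> = 2^(k+1)" by (rule powr_realpow) simp
      finally show ?thesis .
    qed
    then have k2: "y \<in> ball c (2^(k+1)*R)" using R by (simp add: divide_less_eq mult.commute)
    have "indicator {y. R \<le> dist c y} y * ennreal (dist c y powr (-p)) = ennreal (dist c y powr (-p))"
      using True by simp
    also have "\<dots> \<le> ennreal ((2^k*R) powr (-p)) * indicator (ball c (2^(k+1)*R)) y"
      using k1 k2 R p by (auto intro!: ennreal_leI powr_mono2')
    also have "\<dots> \<le> (\<Sum>k. ennreal ((2^k*R) powr (-p)) * indicator (ball c (2^(k+1)*R)) y)"
    proof -
      define F where "F = (\<lambda>k. ennreal ((2^k*R) powr (-p)) * indicator (ball c (2^(k+1)*R)) y)"
      have "(\<Sum>i\<in>{k}. F i) \<le> suminf F" by (rule sum_le_suminf[OF summableI]) auto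
      then have "F k \<le> suminf F" by (simp only: sum.insert finite.emptyI empty_iff not_False_eq_True sum.empty add_0_right)
      then show ?thesis unfolding F_def .

    qed
    finally show ?thesis .
  next
    case False
    then have "indicator {y. R \<le> dist c y} y = (0::ennreal)" by (simp add: indicator_def)
    then show ?thesis by (simp only: mult_zero_left zero_le)
  qed
  have "(\<integral>\<^sup>+ y. indicator {y. R \<le> dist c y} y * ennreal (dist c y powr (-p)) \<partial>lborel)
      \<le> (\<integral>\<^sup>+ y. (\<Sum>k. ennreal ((2^k*R) powr (-p)) * indicator (ball c (2^(k+1)*R)) y) \<partial>lborel)"
    using pt by (intro nn_integral_mono) simp
  also have "\<dots> = (\<Sum>k. \<integral>\<^sup>+ y. ennreal ((2^k*R) powr (-p)) * indicator (ball c (2^(k+1)*R)) y \<partial>lborel)"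
  proof (rule nn_integral_suminf)
    fix k
    have "indicator (ball c (2^(k+1)*R)) \<in> borel_measurable (lborel :: 'a measure)"
      by (rule borel_measurable_indicator) simp
    then show "(\<lambda>y. ennreal ((2^k*R) powr (-p)) * indicator (ball c (2^(k+1)*R)) y) \<in> borel_measurable lborel"
      by (intro borel_measurable_times_ennreal borel_measurable_const)
  qed
  also have "\<dots> = (\<Sum>k. ennreal (A * q^k))"
  proof (intro suminf_cong)
    fix k
    have "(\<integral>\<^sup>+ y. ennreal ((2^k*R) powr (-p)) * indicator (ball c (2^(k+1)*R)) y \<partial>lborel)
        = ennreal ((2^k*R) powr (-p)) * ennreal (V * (2^(k+1)*R)^d)"
      using R by (simp add: nn_integral_cmult_indicator emeasure_ball V_def d_def)
    also have "\<dots> = ennreal (A * q^k)"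
      using shell_term[OF R, of k p V d] R unfolding A_def q_def V_def
      by (simp add: ennreal_mult[symmetric])
    finally show "(\<integral>\<^sup>+ y. ennreal ((2^k*R) powr (-p)) * indicator (ball c (2^(k+1)*R)) y \<partial>lborel) = ennreal (A * q^k)" .
  qed
  also have "\<dots> = ennreal (A / (1 - q))"
  proof -
    have "(\<lambda>k. A * q^k) sums (A * (1 / (1 - q)))"
      using q by (intro sums_mult geometric_sums) auto
    then have "(\<Sum>k. ennreal (A * q^k)) = ennreal (\<Sum>k. A * q^k)"
      using A q by (intro suminf_ennreal2) (auto simp: sums_iff)
    also have "(\<Sum>k. A * q^k) = A / (1 - q)" using \<open>(\<lambda>k. A * q^k) sums _\<close> by (simp add: sums_iff)
    finally show ?thesis .
  qed
  finally show ?thesis unfolding A_def q_def V_def d_def .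
qed

definition SB :: "nat \<Rightarrow> real \<Rightarrow> real \<Rightarrow> real" where
  "SB d p R = (2^d * unit_ball_vol (real d) * R powr (real d - p)) / (1 - 2 powr (real d - p))"

lemma tail1:
  fixes \<Omega> :: "'a::euclidean_space set" and R p :: real
  assumes R: "R > 0" and p: "real DIM('a) < p" and O: "\<Omega> \<in> sets borel"
  shows "(\<integral>\<^sup>+ z. indicator {z. fst z \<in> \<Omega> \<and> R \<le> dist (fst z) (snd z)} z * ennreal (dist (fst z) (snd z) powr (-p)) \<partial>lebesgue)
     \<le> emeasure lborel \<Omega> * ennreal (SB DIM('a) p R)"
proof -
  let ?f = "\<lambda>z::'a\<times>'a. indicator {z. fst z \<in> \<Omega> \<and> R \<le> dist (fst z) (snd z)} z * ennreal (dist (fst z) (snd z) powr (-p))"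
  have m: "?f \<in> borel_measurable (lborel \<Otimes>\<^sub>M lborel)"
  proof -
    have O'[measurable]: "\<Omega> \<in> sets lborel" using O by simp
    show ?thesis by measurable
  qed
  have "integral\<^sup>N lebesgue ?f = integral\<^sup>N (lborel \<Otimes>\<^sub>M lborel) ?f"
    by (simp add: nn_integral_completion lborel_prod)
  also have "\<dots> = (\<integral>\<^sup>+ x. \<integral>\<^sup>+ y. ?f (x, y) \<partial>lborel \<partial>lborel)"
    by (rule lborel.nn_integral_fst[OF m, symmetric])
  also have "\<dots> \<le> (\<integral>\<^sup>+ x. ennreal (SB DIM('a) p R) * indicator \<Omega> x \<partial>lborel)"
  proof (intro nn_integral_mono)
    fix x :: 'a
    show "(\<integral>\<^sup>+ y. ?f (x, y) \<partial>lborel) \<le> ennreal (SB DIM('a) p R) * indicator \<Omega> x"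
    proof (cases "x \<in> \<Omega>")
      case True
      have "(\<integral>\<^sup>+ y. ?f (x, y) \<partial>lborel) = (\<integral>\<^sup>+ y. indicator {y. R \<le> dist x y} y * ennreal (dist x y powr (-p)) \<partial>lborel)"
        using True by (intro nn_integral_cong) (simp add: indicator_def)
      also have "\<dots> \<le> ennreal (SB DIM('a) p R)"
        unfolding SB_def by (rule shell_bound[OF R p])
      finally show ?thesis using True by simp
    next
      case False
      then show ?thesis by (simp add: indicator_def)
    qed
  qed
  also have "\<dots> = ennreal (SB DIM('a) p R) * emeasure lborel \<Omega>"
    using O by (simp add: nn_integral_cmult_indicator)
  finally show ?thesis by (simp add: mult.commute)
qed

lemma tail2:
  fixes \<Omega> :: "'a::euclidean_space set" and R p :: real
  assumes R: "R > 0" and p: "real DIM('a) < p" and O: "\<Omega> \<in> sets borel"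
  shows "(\<integral>\<^sup>+ z. indicator {z. snd z \<in> \<Omega> \<and> R \<le> dist (fst z) (snd z)} z * ennreal (dist (fst z) (snd z) powr (-p)) \<partial>lebesgue)
     \<le> emeasure lborel \<Omega> * ennreal (SB DIM('a) p R)"
proof -
  let ?f = "\<lambda>z::'a\<times>'a. indicator {z. snd z \<in> \<Omega> \<and> R \<le> dist (fst z) (snd z)} z * ennreal (dist (fst z) (snd z) powr (-p))"
  have m: "?f \<in> borel_measurable (lborel \<Otimes>\<^sub>M lborel)"
  proof -
    have O'[measurable]: "\<Omega> \<in> sets lborel" using O by simp
    show ?thesis by measurable
  qed
  have "integral\<^sup>N lebesgue ?f = integral\<^sup>N (lborel \<Otimes>\<^sub>M lborel) ?f"
    by (simp add: nn_integral_completion lborel_prod)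
  also have "\<dots> = (\<integral>\<^sup>+ y. \<integral>\<^sup>+ x. ?f (x, y) \<partial>lborel \<partial>lborel)"
    by (rule lborel_pair.nn_integral_snd[OF m, symmetric])
  also have "\<dots> \<le> (\<integral>\<^sup>+ y. ennreal (SB DIM('a) p R) * indicator \<Omega> y \<partial>lborel)"
  proof (intro nn_integral_mono)
    fix y :: 'a
    show "(\<integral>\<^sup>+ x. ?f (x, y) \<partial>lborel) \<le> ennreal (SB DIM('a) p R) * indicator \<Omega> y"
    proof (cases "y \<in> \<Omega>")
      case True
      have "(\<integral>\<^sup>+ x. ?f (x, y) \<partial>lborel) = (\<integral>\<^sup>+ x. indicator {x. R \<le> dist y x} x * ennreal (dist y x powr (-p)) \<partial>lborel)"
        using True by (intro nn_integral_cong) (simp add: indicator_def dist_commute)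
      also have "\<dots> \<le> ennreal (SB DIM('a) p R)"
        unfolding SB_def by (rule shell_bound[OF R p])
      finally show ?thesis using True by simp
    next
      case False
      then show ?thesis by (simp add: indicator_def)
    qed
  qed
  also have "\<dots> = ennreal (SB DIM('a) p R) * emeasure lborel \<Omega>"
    using O by (simp add: nn_integral_cmult_indicator)
  finally show ?thesis by (simp add: mult.commute)
qed

lemma geo:
  fixes U \<Omega> :: "'a::euclidean_space set"
  assumes fr: "\<forall>z\<in>frontier U. a \<le> infdist z (closure \<Omega>)" and sub: "\<Omega> \<subseteq> U"
    and y: "y \<in> \<Omega>" and x: "x \<notin> U"
  shows "a \<le> dist y x"
proof -
  have "closed_segment y x \<inter> U \<noteq> {}" using y sub by auto
  moreover have "closed_segment y x - U \<noteq> {}" using x by auto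
  ultimately have "closed_segment y x \<inter> frontier U \<noteq> {}"
    by (intro connected_Int_frontier) auto
  then obtain z where z: "z \<in> closed_segment y x" "z \<in> frontier U" by auto
  have "a \<le> infdist z (closure \<Omega>)" using fr z by auto
  also have "\<dots> \<le> dist z y" using y by (intro infdist_le) (auto intro: closure_subset[THEN subsetD])
  also have "\<dots> \<le> dist y x" using dist_in_closed_segment[OF z(1)] by simp
  finally show ?thesis .
qed

lemma AE_pair_lebesgue:
  assumes "AE x in (lebesgue :: 'a::euclidean_space measure). P x"
  shows "AE z in (lebesgue :: ('a \<times> 'a) measure). P (fst z) \<and> P (snd z)"
proof -
  have "AE x in lborel. P x" using assms by (simp add: AE_completion_iff)
  then obtain N where N0: "{x \<in> space lborel. \<not> P x} \<subseteq> N" "emeasure lborel N = 0" "N \<in> sets (lborel :: 'a measure)"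
    by (rule AE_E)
  then have N: "{x \<in> space lborel. \<not> P x} \<subseteq> N" "N \<in> null_sets (lborel :: 'a measure)" by auto
  have "N \<times> UNIV \<in> null_sets (lborel \<Otimes>\<^sub>M (lborel :: 'a measure))"
    using N(2) by (intro lborel.times_in_null_sets1) auto
  moreover have "UNIV \<times> N \<in> null_sets (lborel \<Otimes>\<^sub>M (lborel :: 'a measure))"
    using N(2) by (intro lborel.times_in_null_sets2) auto
  ultimately have "N \<times> UNIV \<union> UNIV \<times> N \<in> null_sets (lborel \<Otimes>\<^sub>M (lborel :: 'a measure))"
    by (rule null_sets.Un)
  then have nn: "N \<times> UNIV \<union> UNIV \<times> N \<in> null_sets (lborel :: ('a \<times> 'a) measure)"
    by (simp add: lborel_prod)
  have "AE z in (lborel :: ('a \<times> 'a) measure). P (fst z) \<and> P (snd z)"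
    by (rule AE_I'[OF nn]) (use N(1) in auto)
  then show ?thesis by (rule AE_completion)
qed

definition intg :: "real \<Rightarrow> 'a::euclidean_space set \<Rightarrow> ('a \<Rightarrow> real) \<Rightarrow> 'a \<times> 'a \<Rightarrow> ennreal" where
  "intg s \<Omega> u z = indicator (Q_set \<Omega>) z *
      ennreal (F_s DIM('a) s ((u (fst z) - u (snd z)) / norm (fst z - snd z))
               / norm (fst z - snd z) powr (real DIM('a) + 2 * s - 1))"

lemma I_s_intg: "I_s s \<Omega> u = integral\<^sup>N lebesgue (intg s \<Omega> u)"
  unfolding I_s_def intg_def by simp

lemma intg_bound:
  fixes u :: "'a::euclidean_space \<Rightarrow> real"
  assumes s: "0 < s" and B: "\<bar>u x\<bar> \<le> B" "\<bar>u y\<bar> \<le> B" and xy: "x \<noteq> y"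
  shows "intg s \<Omega> u (x, y) \<le> ennreal (2 * B\<^sup>2 * dist x y powr (- (real DIM('a) + 2 * s + 1)))"
proof -
  define t where "t = dist x y"
  have t: "t > 0" using xy by (simp add: t_def)
  define \<rho> where "\<rho> = (u x - u y) / t"
  define q where "q = real DIM('a) + 2 * s - 1"
  have nt: "norm (x - y) = t" by (simp add: t_def dist_norm)
  have "F_s DIM('a) s \<rho> \<le> \<rho>\<^sup>2 / 2"
    unfolding F_s_def using s by (intro F_s_le) auto
  moreover have "\<rho>\<^sup>2 \<le> (2 * B / t)\<^sup>2"
  proof -
    have B0: "0 \<le> B" using B(1) by linarith
    have "\<bar>u x - u y\<bar> \<le> 2 * B" using B abs_triangle_ineq4[of "u x" "u y"] by linarith
    then have "\<bar>\<rho>\<bar> \<le> 2 * B / t" using t by (simp add: \<rho>_def abs_divide divide_right_mono)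
    also have "\<dots> = \<bar>2 * B / t\<bar>" using B0 t by simp
    finally show ?thesis by (simp only: abs_le_square_iff)
  qed
  ultimately have "F_s DIM('a) s \<rho> \<le> (2 * B / t)\<^sup>2 / 2" by linarith
  also have "(2 * B / t)\<^sup>2 / 2 = 2 * B\<^sup>2 / t\<^sup>2" by (simp add: power_divide power_mult_distrib)
  finally have F: "F_s DIM('a) s \<rho> \<le> 2 * B\<^sup>2 / t\<^sup>2" .
  have tq: "t powr q > 0" using t by simp
  have "F_s DIM('a) s \<rho> / t powr q \<le> 2 * B\<^sup>2 / t\<^sup>2 / t powr q"
    by (rule divide_right_mono[OF F]) (use tq in linarith)
  also have "\<dots> = 2 * B\<^sup>2 * t powr (- (real DIM('a) + 2 * s + 1))"
  proof -
    have e: "real DIM('a) + 2 * s + 1 = 2 + q" by (simp add: q_def)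
    have "t powr (real DIM('a) + 2 * s + 1) = t powr 2 * t powr q"
      unfolding e by (rule powr_add)
    also have "t powr 2 = t\<^sup>2" using t by simp
    finally have "t powr (real DIM('a) + 2 * s + 1) = t\<^sup>2 * t powr q" .
    then have "t powr (- (real DIM('a) + 2 * s + 1)) = 1 / (t\<^sup>2 * t powr q)"
      by (simp only: powr_minus_divide)
    then show ?thesis by simp
  qed
  finally have *: "F_s DIM('a) s \<rho> / t powr q \<le> 2 * B\<^sup>2 * t powr (- (real DIM('a) + 2 * s + 1))" .
  have "intg s \<Omega> u (x, y) \<le> ennreal (F_s DIM('a) s \<rho> / t powr q)"
    unfolding intg_def by (simp add: nt \<rho>_def q_def indicator_def)
  also have "\<dots> \<le> ennreal (2 * B\<^sup>2 * t powr (- (real DIM('a) + 2 * s + 1)))"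
    using * by (rule ennreal_leI)
  finally show ?thesis by (simp add: t_def)
qed

lemma k1_meas:
  fixes \<Omega> :: "'a::euclidean_space set"
  assumes O: "\<Omega> \<in> sets borel"
  shows "(\<lambda>z::'a\<times>'a. indicator {z. fst z \<in> \<Omega> \<and> R \<le> dist (fst z) (snd z)} z * ennreal (dist (fst z) (snd z) powr (-p))) \<in> borel_measurable lebesgue"
proof -
  have O'[measurable]: "\<Omega> \<in> sets lborel" using O by simp
  have "(\<lambda>z::'a\<times>'a. indicator {z. fst z \<in> \<Omega> \<and> R \<le> dist (fst z) (snd z)} z * ennreal (dist (fst z) (snd z) powr (-p))) \<in> borel_measurable (lborel \<Otimes>\<^sub>M lborel)"
    by measurable
  then show ?thesis unfolding lborel_prod by (rule measurable_completion)
qed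

lemma k2_meas:
  fixes \<Omega> :: "'a::euclidean_space set"
  assumes O: "\<Omega> \<in> sets borel"
  shows "(\<lambda>z::'a\<times>'a. indicator {z. snd z \<in> \<Omega> \<and> R \<le> dist (fst z) (snd z)} z * ennreal (dist (fst z) (snd z) powr (-p))) \<in> borel_measurable lebesgue"
proof -
  have O'[measurable]: "\<Omega> \<in> sets lborel" using O by simp
  have "(\<lambda>z::'a\<times>'a. indicator {z. snd z \<in> \<Omega> \<and> R \<le> dist (fst z) (snd z)} z * ennreal (dist (fst z) (snd z) powr (-p))) \<in> borel_measurable (lborel \<Otimes>\<^sub>M lborel)"
    by measurable
  then show ?thesis unfolding lborel_prod by (rule measurable_completion)
qed

lemma key:
  fixes \<Omega> U :: "'a::euclidean_space set" and u w :: "'a \<Rightarrow> real"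
  assumes s: "0 < s" and R: "0 < R" and O: "\<Omega> \<in> sets borel"
    and sub: "\<Omega> \<subseteq> U" and agree: "\<forall>x\<in>U. u x = w x"
    and geo: "\<forall>y\<in>\<Omega>. \<forall>x. x \<notin> U \<longrightarrow> R \<le> dist y x"
    and bd: "AE x in lebesgue. \<bar>u x\<bar> \<le> B \<and> \<bar>w x\<bar> \<le> B"
  shows "I_s s \<Omega> u \<le> I_s s \<Omega> w + ennreal (2 * B\<^sup>2) *
     (emeasure lborel \<Omega> * ennreal (SB DIM('a) (real DIM('a) + 2 * s + 1) R) +
      emeasure lborel \<Omega> * ennreal (SB DIM('a) (real DIM('a) + 2 * s + 1) R))"
proof -
  define p where "p = real DIM('a) + 2 * s + 1"
  have p: "real DIM('a) < p" using s by (simp add: p_def)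
  define k1 where "k1 = (\<lambda>z::'a\<times>'a. indicator {z. fst z \<in> \<Omega> \<and> R \<le> dist (fst z) (snd z)} z * ennreal (dist (fst z) (snd z) powr (-p)))"
  define k2 where "k2 = (\<lambda>z::'a\<times>'a. indicator {z. snd z \<in> \<Omega> \<and> R \<le> dist (fst z) (snd z)} z * ennreal (dist (fst z) (snd z) powr (-p)))"
  have m1: "k1 \<in> borel_measurable lebesgue" unfolding k1_def by (rule k1_meas[OF O])
  have m2: "k2 \<in> borel_measurable lebesgue" unfolding k2_def by (rule k2_meas[OF O])
  define k where "k = (\<lambda>z. ennreal (2 * B\<^sup>2) * (k1 z + k2 z))"
  have mk: "k \<in> borel_measurable lebesgue" unfolding k_def using m1 m2 by measurable
  have pw: "intg s \<Omega> u z \<le> intg s \<Omega> w z + k z"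
    if zb: "\<bar>u (fst z)\<bar> \<le> B \<and> \<bar>w (fst z)\<bar> \<le> B" "\<bar>u (snd z)\<bar> \<le> B \<and> \<bar>w (snd z)\<bar> \<le> B" for z
  proof -
    obtain x y where z: "z = (x, y)" by (cases z)
    show ?thesis
    proof (cases "z \<in> Q_set \<Omega>")
      case False
      then show ?thesis by (simp add: intg_def)
    next
      case Q: True
      show ?thesis
      proof (cases "x \<in> U \<and> y \<in> U")
        case True
        then have "intg s \<Omega> u z = intg s \<Omega> w z" using agree z by (simp add: intg_def)
        then show ?thesis by (simp add: add_increasing2)
      next
        case False
        then have "x \<notin> U \<or> y \<notin> U" by auto
        then have bnd: "R \<le> dist x y \<and> ((x \<in> \<Omega> \<and> y \<notin> U) \<or> (y \<in> \<Omega> \<and> x \<notin> U))"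
        proof
          assume x: "x \<notin> U"
          then have "y \<in> \<Omega>" using Q sub z by (auto simp: Q_set_def)
          then show ?thesis using geo x by (auto simp: dist_commute)
        next
          assume y: "y \<notin> U"
          then have "x \<in> \<Omega>" using Q sub z by (auto simp: Q_set_def)
          then show ?thesis using geo y by (auto simp: dist_commute)
        qed
        then have xy: "x \<noteq> y" using R by auto
        have "intg s \<Omega> u z \<le> ennreal (2 * B\<^sup>2 * dist x y powr (- (real DIM('a) + 2 * s + 1)))"
          unfolding z using zb z by (intro intg_bound[OF s _ _ xy]) auto
        also have "\<dots> = ennreal (2 * B\<^sup>2) * ennreal (dist x y powr (-p))"
          by (simp add: p_def ennreal_mult)
        also have "\<dots> \<le> k z"
        proof -
          have "ennreal (dist x y powr (-p)) \<le> k1 z + k2 z"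
            using bnd z unfolding k1_def k2_def by (auto simp: indicator_def)
          then show ?thesis unfolding k_def by (intro mult_left_mono) auto
        qed
        finally show ?thesis by (simp add: add_increasing)
      qed
    qed
  qed
  have ae: "AE z in lebesgue. intg s \<Omega> u z \<le> intg s \<Omega> w z + k z"
    using AE_pair_lebesgue[OF bd] by eventually_elim (rule pw; blast)
  have "I_s s \<Omega> u \<le> (\<integral>\<^sup>+ z. intg s \<Omega> w z + k z \<partial>lebesgue)"
    unfolding I_s_intg by (rule nn_integral_mono_AE[OF ae])
  also have "\<dots> \<le> I_s s \<Omega> w + integral\<^sup>N lebesgue k"
    unfolding I_s_intg by (rule nn_int_add_le[OF mk])
  also have "integral\<^sup>N lebesgue k = ennreal (2 * B\<^sup>2) * (integral\<^sup>N lebesgue k1 + integral\<^sup>N lebesgue k2)"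
    unfolding k_def using m1 m2 by (simp add: nn_integral_cmult nn_integral_add)
  also have "integral\<^sup>N lebesgue k1 \<le> emeasure lborel \<Omega> * ennreal (SB DIM('a) p R)"
    unfolding k1_def by (rule tail1[OF R p O])
  also have "integral\<^sup>N lebesgue k2 \<le> emeasure lborel \<Omega> * ennreal (SB DIM('a) p R)"
    unfolding k2_def by (rule tail2[OF R p O])
  finally show ?thesis by (simp add: p_def mult_left_mono add_mono)
qed

lemma key2:
  fixes \<Omega> U :: "'a::euclidean_space set" and u w :: "'a \<Rightarrow> real"
  assumes s: "0 < s" and c1: "0 < c1" and H: "0 < H" and O: "\<Omega> \<in> sets borel"
    and m: "emeasure lborel \<Omega> = ennreal m" and m0: "0 \<le> m"
    and sub: "\<Omega> \<subseteq> U" and agree: "\<forall>x\<in>U. u x = w x"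
    and fr: "\<forall>z\<in>frontier U. c1 * H \<le> infdist z (closure \<Omega>)"
    and bd: "AE x in lebesgue. \<bar>u x\<bar> \<le> B \<and> \<bar>w x\<bar> \<le> B"
  shows "I_s s \<Omega> u \<le> I_s s \<Omega> w + ennreal ((4 * B\<^sup>2 * m * ((2^DIM('a) * unit_ball_vol (real DIM('a))) / (1 - 2 powr (- 1 - 2 * s))) * c1 powr (- 1 - 2 * s)) * H powr (- 1 - 2 * s))"
proof -
  define d where "d = real DIM('a)"
  define p where "p = d + 2 * s + 1"
  define K where "K = (2^DIM('a) * unit_ball_vol d) / (1 - 2 powr (- 1 - 2 * s))"
  have dp: "d - p = - 1 - 2 * s" by (simp add: p_def)
  have q1: "2 powr (- 1 - 2 * s) < 1" using s by (intro powr_less_one) auto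
  have K0: "0 \<le> K" unfolding K_def d_def using q1
    by (intro divide_nonneg_nonneg) auto
  have R: "0 < c1 * H" using c1 H by simp
  have geo': "\<forall>y\<in>\<Omega>. \<forall>x. x \<notin> U \<longrightarrow> c1 * H \<le> dist y x"
    using geo[OF fr sub] by blast
  have SB: "SB DIM('a) p (c1 * H) = K * c1 powr (- 1 - 2 * s) * H powr (- 1 - 2 * s)"
    unfolding SB_def K_def using c1 H dp by (simp add: d_def powr_mult)
  have "I_s s \<Omega> u \<le> I_s s \<Omega> w + ennreal (2 * B\<^sup>2) *
     (emeasure lborel \<Omega> * ennreal (SB DIM('a) (real DIM('a) + 2 * s + 1) (c1 * H)) +
      emeasure lborel \<Omega> * ennreal (SB DIM('a) (real DIM('a) + 2 * s + 1) (c1 * H)))"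
    by (rule key[OF s R O sub agree geo' bd])
  also have "ennreal (2 * B\<^sup>2) *
     (emeasure lborel \<Omega> * ennreal (SB DIM('a) (real DIM('a) + 2 * s + 1) (c1 * H)) +
      emeasure lborel \<Omega> * ennreal (SB DIM('a) (real DIM('a) + 2 * s + 1) (c1 * H)))
     = ennreal ((4 * B\<^sup>2 * m * K * c1 powr (- 1 - 2 * s)) * H powr (- 1 - 2 * s))"
  proof -
    have "SB DIM('a) (real DIM('a) + 2 * s + 1) (c1 * H) = K * c1 powr (- 1 - 2 * s) * H powr (- 1 - 2 * s)"
      using SB by (simp add: p_def d_def)
    moreover have "0 \<le> K * c1 powr (- 1 - 2 * s) * H powr (- 1 - 2 * s)" using K0 by simp
    ultimately show ?thesis using m0 K0
      by (simp add: m ennreal_mult[symmetric] ennreal_plus[symmetric] algebra_simps del: ennreal_plus)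
  qed
  finally show ?thesis unfolding K_def d_def .
qed

theorem mainTheorem3:
  fixes \<Omega> :: "'a::euclidean_space set" and s c1 c2 M :: real
  assumes "0 < s" "s < 1/2"
    and "open \<Omega>" "connected \<Omega>" "bounded \<Omega>" "\<Omega> \<noteq> {}"
    and "0 < c1" "c1 \<le> c2" "0 \<le> M"
  shows "\<exists>C>0. \<forall>(OmH :: real \<Rightarrow> 'a set) (eta :: real \<Rightarrow> 'a \<Rightarrow> real) (g :: 'a \<Rightarrow> real).
     (\<forall>H>0. open (OmH H) \<and> bounded (OmH H) \<and> \<Omega> \<subseteq> OmH H \<and>
         (\<forall>x\<in>frontier (OmH H). c1 * H \<le> infdist x (closure \<Omega>) \<and> infdist x (closure \<Omega>) \<le> c2 * H)) \<longrightarrow>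
     (\<forall>H>0. (\<exists>\<phi>. smooth_on UNIV \<phi> \<and> (\<forall>x\<in>- \<Omega>. eta H x = \<phi> x)) \<and>
         (\<forall>x\<in>- \<Omega>. 0 \<le> eta H x \<and> eta H x \<le> 1) \<and>
         closure {x\<in>- \<Omega>. eta H x \<noteq> 0} \<subseteq> closure (OmH (H + 1)) - \<Omega> \<and>
         (\<forall>x\<in>OmH H - \<Omega>. eta H x = 1)) \<longrightarrow>
     Linf_bound (- \<Omega>) g M \<longrightarrow>
     (\<forall>H\<ge>1.
        (\<forall>v\<in>V_space s \<Omega> g. Linf_bound UNIV v M \<longrightarrow>
           I_s s \<Omega> v \<le> I_s s \<Omega> (trunc_op \<Omega> (eta H) v) + ennreal (C * H powr (-1 - 2 * s)) \<and>
           I_s s \<Omega> (trunc_op \<Omega> (eta H) v) \<le> I_s s \<Omega> v + ennreal (C * H powr (-1 - 2 * s))) \<and>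
        (\<forall>w\<in>V_space s \<Omega> (\<lambda>x. g x * eta H x). Linf_bound UNIV w M \<longrightarrow>
           I_s s \<Omega> w \<le> I_s s \<Omega> (ext_op \<Omega> (eta H) g w) + ennreal (C * H powr (-1 - 2 * s)) \<and>
           I_s s \<Omega> (ext_op \<Omega> (eta H) g w) \<le> I_s s \<Omega> w + ennreal (C * H powr (-1 - 2 * s))))"
proof -
  note ast = assms
  have O: "\<Omega> \<in> sets borel" using assms(3) by auto
  obtain r where r: "\<Omega> \<subseteq> ball 0 r" using assms(5) bounded_subset_ballD by blast
  have "emeasure lborel \<Omega> \<le> emeasure lborel (ball (0::'a) r)"
    using r by (intro emeasure_mono) auto
  also have "\<dots> < \<infinity>" by (rule emeasure_lborel_ball_finite)
  finally have "emeasure lborel \<Omega> \<noteq> \<infinity>" by simp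
  then have m: "emeasure lborel \<Omega> = ennreal (measure lborel \<Omega>)"
    using emeasure_eq_ennreal_measure[of lborel \<Omega>] by (simp add: top_unique)
  define m where "m = measure lborel \<Omega>"
  have m0: "0 \<le> m" unfolding m_def by simp
  define K where "K = (2^DIM('a) * unit_ball_vol (real DIM('a))) / (1 - 2 powr (- 1 - 2 * s))"
  have q1: "2 powr (- 1 - 2 * s) < 1" using assms(1) by (intro powr_less_one) auto
  have K0: "0 \<le> K" unfolding K_def using q1 by (intro divide_nonneg_nonneg) auto
  define C0 where "C0 = 4 * (2 * M)\<^sup>2 * m * K * c1 powr (- 1 - 2 * s)"
  have C00: "0 \<le> C0" unfolding C0_def using m0 K0 by simp
  define C where "C = C0 + 1"
  have C: "0 < C" using C00 by (simp add: C_def)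
  have weak: "X \<le> Y + ennreal (C * H powr (-1 - 2 * s))"
    if "X \<le> Y + ennreal (C0 * H powr (-1 - 2 * s))" for X Y :: ennreal and H :: real
  proof -
    have "ennreal (C0 * H powr (-1 - 2 * s)) \<le> ennreal (C * H powr (-1 - 2 * s))"
      by (intro ennreal_leI mult_right_mono) (auto simp: C_def)
    then show ?thesis using that by (meson add_left_mono order.trans)
  qed
  show ?thesis
  proof (intro exI[of _ C] conjI C allI impI)
    fix OmH :: "real \<Rightarrow> 'a set" and eta :: "real \<Rightarrow> 'a \<Rightarrow> real" and g :: "'a \<Rightarrow> real" and H :: real
    assume hO: "\<forall>H>0. open (OmH H) \<and> bounded (OmH H) \<and> \<Omega> \<subseteq> OmH H \<and>
         (\<forall>x\<in>frontier (OmH H). c1 * H \<le> infdist x (closure \<Omega>) \<and> infdist x (closure \<Omega>) \<le> c2 * H)"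
      and he: "\<forall>H>0. (\<exists>\<phi>. smooth_on UNIV \<phi> \<and> (\<forall>x\<in>- \<Omega>. eta H x = \<phi> x)) \<and>
         (\<forall>x\<in>- \<Omega>. 0 \<le> eta H x \<and> eta H x \<le> 1) \<and>
         closure {x\<in>- \<Omega>. eta H x \<noteq> 0} \<subseteq> closure (OmH (H + 1)) - \<Omega> \<and>
         (\<forall>x\<in>OmH H - \<Omega>. eta H x = 1)"
      and hg: "Linf_bound (- \<Omega>) g M" and H1: "1 \<le> H"
    have H: "0 < H" using H1 by simp
    have sub: "\<Omega> \<subseteq> OmH H" using hO H by blast
    have fr: "\<forall>z\<in>frontier (OmH H). c1 * H \<le> infdist z (closure \<Omega>)" using hO H by blast
    have e01: "\<And>x. x \<notin> \<Omega> \<Longrightarrow> 0 \<le> eta H x \<and> eta H x \<le> 1" using he H by blast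
    have e1: "\<And>x. x \<in> OmH H \<Longrightarrow> x \<notin> \<Omega> \<Longrightarrow> eta H x = 1" using he H by blast
    have ag: "AE x in lebesgue. x \<notin> \<Omega> \<longrightarrow> \<bar>g x\<bar> \<le> M" using hg by (simp add: Linf_bound_def)
    have K2: "\<And>u w. \<forall>x\<in>OmH H. u x = w x \<Longrightarrow> AE x in lebesgue. \<bar>u x\<bar> \<le> 2 * M \<and> \<bar>w x\<bar> \<le> 2 * M \<Longrightarrow>
        I_s s \<Omega> u \<le> I_s s \<Omega> w + ennreal (C * H powr (-1 - 2 * s))"
    proof -
      fix u w :: "'a \<Rightarrow> real"
      assume a1: "\<forall>x\<in>OmH H. u x = w x" and a2: "AE x in lebesgue. \<bar>u x\<bar> \<le> 2 * M \<and> \<bar>w x\<bar> \<le> 2 * M"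
      have "I_s s \<Omega> u \<le> I_s s \<Omega> w + ennreal ((4 * (2 * M)\<^sup>2 * m * ((2^DIM('a) * unit_ball_vol (real DIM('a))) / (1 - 2 powr (- 1 - 2 * s))) * c1 powr (- 1 - 2 * s)) * H powr (- 1 - 2 * s))"
        by (rule key2[OF assms(1) assms(7) H O m[folded m_def] m0 sub a1 fr a2])
      then show "I_s s \<Omega> u \<le> I_s s \<Omega> w + ennreal (C * H powr (-1 - 2 * s))"
        by (intro weak) (simp add: C0_def K_def)
    qed
    show "\<forall>v\<in>V_space s \<Omega> g. Linf_bound UNIV v M \<longrightarrow>
           I_s s \<Omega> v \<le> I_s s \<Omega> (trunc_op \<Omega> (eta H) v) + ennreal (C * H powr (-1 - 2 * s)) \<and>
           I_s s \<Omega> (trunc_op \<Omega> (eta H) v) \<le> I_s s \<Omega> v + ennreal (C * H powr (-1 - 2 * s))"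
    proof (intro ballI impI)
      fix v :: "'a \<Rightarrow> real" assume "v \<in> V_space s \<Omega> g" "Linf_bound UNIV v M"
      then have av: "AE x in lebesgue. \<bar>v x\<bar> \<le> M" by (simp add: Linf_bound_def)
      have agr: "\<forall>x\<in>OmH H. v x = trunc_op \<Omega> (eta H) v x"
        using e1 by (auto simp: trunc_op_def)
      have pt: "\<bar>trunc_op \<Omega> (eta H) v x\<bar> \<le> \<bar>v x\<bar>" for x
      proof (cases "x \<in> \<Omega>")
        case False
        then have "\<bar>eta H x\<bar> \<le> 1" using e01 by auto
        then have "\<bar>v x\<bar> * \<bar>eta H x\<bar> \<le> \<bar>v x\<bar>" by (simp add: mult_left_le)
        then show ?thesis using False by (simp add: trunc_op_def abs_mult)
      qed (simp add: trunc_op_def)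
      have bd: "AE x in lebesgue. \<bar>v x\<bar> \<le> 2 * M \<and> \<bar>trunc_op \<Omega> (eta H) v x\<bar> \<le> 2 * M"
        using av
      proof eventually_elim
        case (elim x) then show ?case using pt[of x] assms(9) by linarith
      qed
      have bd': "AE x in lebesgue. \<bar>trunc_op \<Omega> (eta H) v x\<bar> \<le> 2 * M \<and> \<bar>v x\<bar> \<le> 2 * M"
        using bd by eventually_elim auto
      show "I_s s \<Omega> v \<le> I_s s \<Omega> (trunc_op \<Omega> (eta H) v) + ennreal (C * H powr (-1 - 2 * s)) \<and>
           I_s s \<Omega> (trunc_op \<Omega> (eta H) v) \<le> I_s s \<Omega> v + ennreal (C * H powr (-1 - 2 * s))"
        using K2[OF agr bd] K2[OF _ bd'] agr by auto
    qed
    show "\<forall>w\<in>V_space s \<Omega> (\<lambda>x. g x * eta H x). Linf_bound UNIV w M \<longrightarrow>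
           I_s s \<Omega> w \<le> I_s s \<Omega> (ext_op \<Omega> (eta H) g w) + ennreal (C * H powr (-1 - 2 * s)) \<and>
           I_s s \<Omega> (ext_op \<Omega> (eta H) g w) \<le> I_s s \<Omega> w + ennreal (C * H powr (-1 - 2 * s))"
    proof (intro ballI impI)
      fix w :: "'a \<Rightarrow> real" assume "w \<in> V_space s \<Omega> (\<lambda>x. g x * eta H x)" "Linf_bound UNIV w M"
      then have aw: "AE x in lebesgue. \<bar>w x\<bar> \<le> M" by (simp add: Linf_bound_def)
      have agr: "\<forall>x\<in>OmH H. w x = ext_op \<Omega> (eta H) g w x"
        using e1 by (auto simp: ext_op_def)
      have bd: "AE x in lebesgue. \<bar>w x\<bar> \<le> 2 * M \<and> \<bar>ext_op \<Omega> (eta H) g w x\<bar> \<le> 2 * M"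
        using aw ag
      proof eventually_elim
        case (elim x)
        show ?case
        proof (cases "x \<in> \<Omega>")
          case True then show ?thesis using elim assms(9) by (simp add: ext_op_def)
        next
          case False
          then have "\<bar>1 - eta H x\<bar> \<le> 1" using e01 by auto
          moreover have "\<bar>g x\<bar> \<le> M" using elim False by auto
          ultimately have "\<bar>1 - eta H x\<bar> * \<bar>g x\<bar> \<le> M"
            by (metis abs_ge_zero mult_left_le order.trans mult.commute)
          then have "\<bar>w x + (1 - eta H x) * g x\<bar> \<le> 2 * M"
            using elim abs_triangle_ineq[of "w x" "(1 - eta H x) * g x"] by (simp add: abs_mult)
          then show ?thesis using False elim assms(9) by (simp add: ext_op_def)
        qed
      qed
      have bd': "AE x in lebesgue. \<bar>ext_op \<Omega> (eta H) g w x\<bar> \<le> 2 * M \<and> \<bar>w x\<bar> \<le> 2 * M"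
        using bd by eventually_elim auto
      show "I_s s \<Omega> w \<le> I_s s \<Omega> (ext_op \<Omega> (eta H) g w) + ennreal (C * H powr (-1 - 2 * s)) \<and>
           I_s s \<Omega> (ext_op \<Omega> (eta H) g w) \<le> I_s s \<Omega> w + ennreal (C * H powr (-1 - 2 * s))"
        using K2[OF agr bd] K2[OF _ bd'] agr by auto
    qed
  qed
qed

end
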